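(* Let $n,k$ be positive integers and $K=\min(\lfloor (n+k)/2\rfloor, n)$. Then \[ |\mathrm{Hom}^1(P_n,P_k)| = \sum_{l=\lceil (n-1)/2\rceil}^{K-1} |\mathcal L(l,\, n-1-l;\, 0,\, k-1)|. \]
   Context: For a positive integer $m$, $P_m$ denotes the path with vertex set $[m]=\{1,\dots,m\}$ in which $i$ and $j$ are adjacent iff $|i-j|=1$; $\mathrm{Hom}(P_n,P_k)$ is the set of maps $f:[n]\to[k]$ with $|f(i)-f(i+1)|=1$ for $1\le i\le n-1$, and $\mathrm{Hom}^1(P_n,P_k)=\{f\in\mathrm{Hom}(P_n,P_k): f(1)=1\}$. A lattice path from the origin to $(a,b)\in\mathbb N^2$ is a sequence of points of $\mathbb Z^2$ starting at $(0,0)$ and ending at $(a,b)$, each step being $(1,0)$ (east) or $(0,1)$ (north). For nonnegative integers $a,b,t,s$ with $a+t\ge b\ge a-s$, $\mathcal L(a,b;t,s)$ denotes the set of lattice paths from $(0,0)$ to $(a,b)$ all of whose points $(x,y)$ satisfy $x-s\le y\le x+t$. *)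

theory Defs
  imports Complex_Main "HOL-Library.FuncSet"
begin

definition Hom :: "nat \<Rightarrow> nat \<Rightarrow> (nat \<Rightarrow> nat) set" where
  "Hom n k = {f \<in> {1..n} \<rightarrow>\<^sub>E {1..k}.
     \<forall>i. 1 \<le> i \<and> i \<le> n - 1 \<longrightarrow> (f i = f (i+1) + 1 \<or> f (i+1) = f i + 1)}"

definition Hom1 :: "nat \<Rightarrow> nat \<Rightarrow> (nat \<Rightarrow> nat) set" where
  "Hom1 n k = {f \<in> Hom n k. f 1 = 1}"

definition is_lattice_path :: "nat \<Rightarrow> nat \<Rightarrow> (int \<times> int) list \<Rightarrow> bool" where
  "is_lattice_path a b p \<longleftrightarrow> p \<noteq> [] \<and> hd p = (0,0) \<and> last p = (int a, int b) \<and>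
     (\<forall>i. i + 1 < length p \<longrightarrow>
        (p ! (i+1) = (fst (p ! i) + 1, snd (p ! i)) \<or> p ! (i+1) = (fst (p ! i), snd (p ! i) + 1)))"

definition LP :: "nat \<Rightarrow> nat \<Rightarrow> nat \<Rightarrow> nat \<Rightarrow> (int \<times> int) list set" where
  "LP a b t s = {p. is_lattice_path a b p \<and>
     (\<forall>(x,y) \<in> set p. x - int s \<le> y \<and> y \<le> x + int t)}"

end

theory Submission
  imports Defs
begin

definition cT :: "bool list \<Rightarrow> int" where "cT ds = int (length (filter id ds))"
definition cF :: "bool list \<Rightarrow> int" where "cF ds = int (length (filter Not ds))"
definition hh :: "bool list \<Rightarrow> int" where "hh ds = cT ds - cF ds"

lemma cT_snoc[simp]: "cT (xs@[b]) = cT xs + (if b then 1 else 0)" by (simp add: cT_def)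
lemma cF_snoc[simp]: "cF (xs@[b]) = cF xs + (if b then 0 else 1)" by (simp add: cF_def)
lemma hh_snoc[simp]: "hh (xs@[b]) = hh xs + (if b then 1 else -1)" by (simp add: hh_def)
lemma cT_nil[simp]: "cT [] = 0" and cF_nil[simp]: "cF [] = 0" and hh_nil[simp]: "hh [] = 0"
  by (simp_all add: cT_def cF_def hh_def)
lemma cT_cF_len: "cT ds + cF ds = int (length ds)"
  by (induction ds rule: rev_induct) auto

definition pts :: "bool list \<Rightarrow> (int \<times> int) list" where
  "pts ds = map (\<lambda>j. (cT (take j ds), cF (take j ds))) [0..<Suc (length ds)]"

definition okk :: "nat \<Rightarrow> bool list \<Rightarrow> bool" where
  "okk s ds = (\<forall>j\<le>length ds. 0 \<le> hh (take j ds) \<and> hh (take j ds) \<le> int s)"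

definition DD :: "nat \<Rightarrow> nat \<Rightarrow> bool list set" where
  "DD n s = {ds. length ds = n - 1 \<and> okk s ds}"

definition FF :: "nat \<Rightarrow> bool list \<Rightarrow> nat \<Rightarrow> nat" where
  "FF n ds = restrict (\<lambda>i. nat (1 + hh (take (i-1) ds))) {1..n}"

lemma pts_len[simp]: "length (pts ds) = Suc (length ds)" by (simp add: pts_def)
lemma pts_nth: "j \<le> length ds \<Longrightarrow> pts ds ! j = (cT (take j ds), cF (take j ds))"
  by (simp add: pts_def less_Suc_eq_le nth_map_upt del: upt_Suc)

lemma pts_lattice: "is_lattice_path (length (filter id ds)) (length (filter Not ds)) (pts ds)"
  unfolding is_lattice_path_def
proof (intro conjI allI impI)
  show "pts ds \<noteq> []" using pts_len[of ds] by (metis Zero_neq_Suc list.size(3))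
  show "hd (pts ds) = (0,0)"
    by (subst hd_conv_nth) (auto simp: pts_def pts_nth nth_map_upt simp del: upt_Suc)
  show "last (pts ds) = (int (length (filter id ds)), int (length (filter Not ds)))"
  proof -
    have ne: "pts ds \<noteq> []" using pts_len[of ds] by (metis Zero_neq_Suc list.size(3))
    have "last (pts ds) = pts ds ! length ds" using last_conv_nth[OF ne] by simp
    then show ?thesis by (simp add: pts_nth cT_def cF_def)
  qed
  fix i assume "i + 1 < length (pts ds)"
  then have i: "i < length ds" by simp
  show "pts ds ! (i + 1) = (fst (pts ds ! i) + 1, snd (pts ds ! i)) \<or>
        pts ds ! (i + 1) = (fst (pts ds ! i), snd (pts ds ! i) + 1)"
    using i by (simp add: pts_nth take_Suc_conv_app_nth)
qed

lemma pts_bounds: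
  assumes "okk s ds" shows "\<forall>(x,y)\<in>set (pts ds). x - int s \<le> y \<and> y \<le> x + int 0"
proof
  fix q assume "q \<in> set (pts ds)"
  then obtain j where j: "j < length (pts ds)" "q = pts ds ! j" by (auto simp: in_set_conv_nth)
  then have "j \<le> length ds" by simp
  with assms have "0 \<le> hh (take j ds) \<and> hh (take j ds) \<le> int s" by (simp add: okk_def)
  then show "case q of (x,y) \<Rightarrow> x - int s \<le> y \<and> y \<le> x + int 0"
    using j \<open>j \<le> length ds\<close> by (simp add: pts_nth hh_def)
qed

lemma pts_inj: "inj pts"
proof (rule injI)
  fix ds es assume eq: "pts ds = pts es"
  then have len: "length ds = length es" using pts_len by (metis Suc_inject)
  show "ds = es"
  proof (rule nth_equalityI[OF len])
    fix i assume i: "i < length ds"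
    have "pts ds ! i = pts es ! i" "pts ds ! Suc i = pts es ! Suc i" using eq by auto
    then show "ds ! i = es ! i" using i len
      by (auto simp: pts_nth take_Suc_conv_app_nth split: if_splits)
  qed
qed

lemma pts_surj:
  assumes "p \<in> LP l m 0 s"
  shows "\<exists>ds. p = pts ds \<and> length ds = l + m \<and> okk s ds"
proof -
  from assms have lp: "is_lattice_path l m p" and bd: "\<forall>(x,y)\<in>set p. x - int s \<le> y \<and> y \<le> x + int 0"
    by (auto simp: LP_def)
  define ds where "ds = map (\<lambda>i. fst (p!Suc i) = fst (p!i) + 1) [0..<length p - 1]"
  have ne: "p \<noteq> []" using lp by (simp add: is_lattice_path_def)
  have lds: "length ds = length p - 1" by (simp add: ds_def)
  have claim: "j < length p \<longrightarrow> p!j = (cT (take j ds), cF (take j ds))" for j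
  proof (induction j)
    case 0
    then show ?case using lp ne by (auto simp: is_lattice_path_def hd_conv_nth)
  next
    case (Suc j)
    show ?case
    proof
      assume a: "Suc j < length p"
      then have IH: "p!j = (cT (take j ds), cF (take j ds))" using Suc by simp
      have jl: "j < length ds" using a lds by simp
      have dj: "ds ! j = (fst (p!Suc j) = fst (p!j) + 1)" using jl lds by (simp add: ds_def)
      have st: "p ! (j+1) = (fst (p ! j) + 1, snd (p ! j)) \<or> p ! (j+1) = (fst (p ! j), snd (p ! j) + 1)"
        using lp a by (simp add: is_lattice_path_def)
      show "p!Suc j = (cT (take (Suc j) ds), cF (take (Suc j) ds))"
        using st IH dj jl by (auto simp: take_Suc_conv_app_nth)
    qed
  qed
  have lp2: "length p = Suc (length ds)" using lds ne by (cases p) auto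
  have peq: "p = pts ds"
    by (rule nth_equalityI) (use lp2 claim in \<open>auto simp: pts_nth\<close>)
  have "last p = (int l, int m)" using lp by (simp add: is_lattice_path_def)
  then have "cT ds = int l" "cF ds = int m"
    using claim[of "length ds"] lp2 ne by (auto simp: last_conv_nth)
  then have len: "length ds = l + m" using cT_cF_len[of ds] by simp
  have "okk s ds" unfolding okk_def
  proof (intro allI impI)
    fix j assume "j \<le> length ds"
    then have "j < length p" using lp2 by simp
    then have "p ! j \<in> set p" by simp
    with bd have "fst (p!j) - int s \<le> snd (p!j) \<and> snd (p!j) \<le> fst (p!j)" by auto
    then show "0 \<le> hh (take j ds) \<and> hh (take j ds) \<le> int s"
      using claim[of j] \<open>j < length p\<close> by (simp add: hh_def)
  qed
  then show ?thesis using peq len by blast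
qed


lemma FF_in:
  assumes n: "n \<ge> 1" and ds: "ds \<in> DD n (k-1)" and k: "k \<ge> 1"
  shows "FF n ds \<in> Hom1 n k"
proof -
  from ds have len: "length ds = n - 1" and ok: "okk (k-1) ds" by (auto simp: DD_def)
  have bnd: "j \<le> n - 1 \<Longrightarrow> 0 \<le> hh (take j ds) \<and> hh (take j ds) \<le> int k - 1" for j
    using ok len k by (auto simp: okk_def)
  have pi: "FF n ds \<in> {1..n} \<rightarrow>\<^sub>E {1..k}"
  proof
    fix i assume "i \<in> {1..n}"
    then have "i - 1 \<le> n - 1" by auto
    from bnd[OF this] show "FF n ds i \<in> {1..k}" using \<open>i \<in> {1..n}\<close> by (auto simp: FF_def)
  next
    fix i assume "i \<notin> {1..n}" then show "FF n ds i = undefined" by (auto simp: FF_def)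
  qed
  have one: "FF n ds 1 = 1" using n by (simp add: FF_def)
  have step: "FF n ds i = FF n ds (i+1) + 1 \<or> FF n ds (i+1) = FF n ds i + 1"
    if i: "1 \<le> i" "i \<le> n - 1" for i
  proof -
    have il: "i - 1 < length ds" using i len by simp
    have t: "take i ds = take (i-1) ds @ [ds!(i-1)]"
      using take_Suc_conv_app_nth[OF il] i by simp
    have b1: "0 \<le> hh (take (i-1) ds)" using bnd[of "i-1"] i by simp
    have b2: "0 \<le> hh (take i ds)" using bnd[of i] i by simp
    have "FF n ds i = nat (1 + hh (take (i-1) ds))" "FF n ds (i+1) = nat (1 + hh (take i ds))"
      using i by (auto simp: FF_def)
    then show ?thesis using t b1 b2 by (cases "ds!(i-1)") (auto simp: nat_add_distrib)
  qed
  show ?thesis using pi one step by (auto simp: Hom1_def Hom_def)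
qed

lemma FF_inj:
  assumes "ds \<in> DD n s" "es \<in> DD n s" "FF n ds = FF n es" and n1: "n \<ge> 1"
  shows "ds = es"
proof -
  have len: "length ds = n - 1" "length es = n - 1" and ok: "okk s ds" "okk s es"
    using assms by (auto simp: DD_def)
  have hv: "j \<le> n - 1 \<Longrightarrow> hh (take j ds) = hh (take j es)" for j
  proof -
    assume j: "j \<le> n - 1"
    have "FF n ds (Suc j) = FF n es (Suc j)" using assms(3) by simp
    moreover have "Suc j \<in> {1..n}" using j n1 by auto
    ultimately have "nat (1 + hh (take j ds)) = nat (1 + hh (take j es))" by (simp add: FF_def)
    moreover have "0 \<le> hh (take j ds)" "0 \<le> hh (take j es)" using ok j len by (auto simp: okk_def)
    ultimately show ?thesis by simp
  qed
  show ?thesis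
  proof (rule nth_equalityI)
    show "length ds = length es" using len by simp
    fix i assume i: "i < length ds"
    have "hh (take i ds) = hh (take i es)" "hh (take (Suc i) ds) = hh (take (Suc i) es)"
      using hv[of i] hv[of "Suc i"] i len by auto
    then show "ds ! i = es ! i" using i len
      by (auto simp: take_Suc_conv_app_nth split: if_splits)
  qed
qed

lemma FF_surj:
  assumes n: "n \<ge> 1" and k: "k \<ge> 1" and f: "f \<in> Hom1 n k"
  shows "\<exists>ds\<in>DD n (k-1). f = FF n ds"
proof -
  from f have pi: "f \<in> {1..n} \<rightarrow>\<^sub>E {1..k}" and f1: "f 1 = 1"
    and st: "\<And>i. 1 \<le> i \<Longrightarrow> i \<le> n - 1 \<Longrightarrow> f i = f (i+1) + 1 \<or> f (i+1) = f i + 1"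
    by (auto simp: Hom1_def Hom_def)
  define ds where "ds = map (\<lambda>i. f (i+2) = f (i+1) + 1) [0..<n-1]"
  have lds: "length ds = n - 1" by (simp add: ds_def)
  have claim: "j < n \<longrightarrow> int (f (Suc j)) = 1 + hh (take j ds)" for j
  proof (induction j)
    case 0 then show ?case using f1 by simp
  next
    case (Suc j)
    show ?case
    proof
      assume a: "Suc j < n"
      then have IH: "int (f (Suc j)) = 1 + hh (take j ds)" using Suc by simp
      have jl: "j < length ds" using a lds by simp
      have dj: "ds ! j = (f (j+2) = f (j+1) + 1)" using jl lds by (simp add: ds_def)
      have s: "f (Suc j) = f (Suc (Suc j)) + 1 \<or> f (Suc (Suc j)) = f (Suc j) + 1"
        using st[of "Suc j"] a by simp
      have dj': "ds ! j = (f (Suc (Suc j)) = f (Suc j) + 1)" using dj by (simp add: numeral_2_eq_2)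
      have hs: "hh (take (Suc j) ds) = hh (take j ds) + (if ds ! j then 1 else -1)"
        using jl by (simp add: take_Suc_conv_app_nth)
      show "int (f (Suc (Suc j))) = 1 + hh (take (Suc j) ds)"
      proof (cases "f (Suc (Suc j)) = f (Suc j) + 1")
        case True
        then show ?thesis using hs dj' IH by simp
      next
        case False
        then have "f (Suc j) = f (Suc (Suc j)) + 1" using s by blast
        then show ?thesis using hs dj' IH False by simp
      qed
    qed
  qed
  have ok: "okk (k-1) ds" unfolding okk_def
  proof (intro allI impI)
    fix j assume "j \<le> length ds"
    then have j: "j < n" using lds n by simp
    then have "f (Suc j) \<in> {1..k}" using pi by auto
    then show "0 \<le> hh (take j ds) \<and> hh (take j ds) \<le> int (k-1)"
      using claim[of j] j k by auto
  qed
  have "f = FF n ds"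
  proof
    fix i show "f i = FF n ds i"
    proof (cases "i \<in> {1..n}")
      case True
      then have i1: "i - 1 < n" and si: "Suc (i - 1) = i" by auto
      have "int (f (Suc (i-1))) = 1 + hh (take (i-1) ds)" using claim[of "i-1"] i1 by blast
      then have e: "int (f i) = 1 + hh (take (i-1) ds)" unfolding si .
      have "FF n ds i = nat (1 + hh (take (i-1) ds))" using True unfolding FF_def by simp
      then show ?thesis unfolding e[symmetric] by simp
    next
      case False
      have "f i = undefined" using PiE_arb[OF pi False] .
      moreover have "FF n ds i = undefined" using False unfolding FF_def by auto
      ultimately show ?thesis by simp
    qed
  qed
  moreover have "ds \<in> DD n (k-1)" unfolding DD_def using ok lds by blast
  ultimately show ?thesis by blast
qed

lemma card_Hom1_DD:
  assumes "n \<ge> 1" "k \<ge> 1"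
  shows "card (Hom1 n k) = card (DD n (k-1))"
proof -
  have "bij_betw (FF n) (DD n (k-1)) (Hom1 n k)"
    unfolding bij_betw_def
  proof
    show "inj_on (FF n) (DD n (k-1))" by (rule inj_onI) (rule FF_inj, use assms in auto)
    show "FF n ` DD n (k-1) = Hom1 n k"
      using FF_in[OF assms(1) _ assms(2)] FF_surj[OF assms] by blast
  qed
  then show ?thesis by (simp add: bij_betw_same_card)
qed


lemma ceil_half: "nat \<lceil>(real n - 1) / 2\<rceil> = n div 2"
proof -
  have "\<lceil>(real n - 1) / 2\<rceil> = int (n div 2)"
  proof (rule ceiling_unique)
    have "n = 2 * (n div 2) + n mod 2" by simp
    moreover have "n mod 2 = 0 \<or> n mod 2 = 1" by auto
    ultimately have "real n = 2 * real (n div 2) \<or> real n = 2 * real (n div 2) + 1"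
      by (metis add_0_right of_nat_1 of_nat_add of_nat_mult of_nat_numeral)
    then show "real_of_int (int (n div 2)) - 1 < (real n - 1) / 2"
      and "(real n - 1) / 2 \<le> real_of_int (int (n div 2))" by auto
  qed
  then show ?thesis by simp
qed

lemma finite_DD: "finite (DD n s)"
proof -
  have "DD n s \<subseteq> {xs. set xs \<subseteq> UNIV \<and> length xs = n - 1}" by (auto simp: DD_def)
  moreover have "finite {xs::bool list. set xs \<subseteq> UNIV \<and> length xs = n - 1}"
    by (rule finite_lists_length_eq) simp
  ultimately show ?thesis by (rule finite_subset)
qed

lemma range_aux: assumes "l + m = n - 1" "m \<le> l" "l \<le> m + k - 1" "n \<ge> 1" "k \<ge> 1"
  shows "(l::nat) \<in> {n div 2 .. min ((n + k) div 2) n - 1}"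
proof -
  have a: "n \<le> 2*l + 1" using assms by linarith
  have "n div 2 \<le> (2*l+1) div 2" using a by (rule div_le_mono)
  then have 1: "n div 2 \<le> l" by simp
  have b: "2*(l+1) \<le> n + k" using assms by arith
  have "(2*(l+1)) div 2 \<le> (n+k) div 2" using b by (rule div_le_mono)
  then have 2: "l + 1 \<le> (n+k) div 2" by simp
  have 3: "l + 1 \<le> n" using assms by linarith
  show ?thesis using 1 2 3 by simp
qed

lemma DD_image:
  assumes n: "n \<ge> 1" and k: "k \<ge> 1"
  shows "pts ` DD n (k-1) =
    (\<Union>l \<in> {n div 2 .. min ((n + k) div 2) n - 1}. LP l (n - 1 - l) 0 (k - 1))"
proof
  show "pts ` DD n (k-1) \<subseteq> (\<Union>l \<in> {n div 2 .. min ((n + k) div 2) n - 1}. LP l (n - 1 - l) 0 (k - 1))"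
  proof
    fix p assume "p \<in> pts ` DD n (k-1)"
    then obtain ds where ds: "ds \<in> DD n (k-1)" and p: "p = pts ds" by auto
    have len: "length ds = n - 1" and ok: "okk (k-1) ds" using ds by (auto simp: DD_def)
    define l where "l = length (filter id ds)"
    have sum: "l + length (filter Not ds) = n - 1" using cT_cF_len[of ds] len
      by (simp add: cT_def cF_def l_def)
    have "0 \<le> hh (take (length ds) ds) \<and> hh (take (length ds) ds) \<le> int (k-1)"
      using ok unfolding okk_def by blast
    moreover have "hh ds = int l - int (length (filter Not ds))"
      by (simp add: hh_def cT_def cF_def l_def)
    ultimately have h: "0 \<le> int l - int (length (filter Not ds))" "int l - int (length (filter Not ds)) \<le> int k - 1"
      using k by auto
    have m: "length (filter Not ds) = n - 1 - l" using sum by simp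
    have lp: "is_lattice_path l (n - 1 - l) p" using pts_lattice[of ds] p m unfolding l_def by simp
    have "p \<in> LP l (n - 1 - l) 0 (k - 1)"
      unfolding LP_def using lp pts_bounds[OF ok] p by blast
    moreover have "l \<in> {n div 2 .. min ((n + k) div 2) n - 1}"
    proof -
      have "length (filter Not ds) \<le> l" "l \<le> length (filter Not ds) + k - 1" using h by linarith+
      then show ?thesis by (rule range_aux[OF sum _ _ n k])
    qed
    ultimately show "p \<in> (\<Union>l \<in> {n div 2 .. min ((n + k) div 2) n - 1}. LP l (n - 1 - l) 0 (k - 1))"
      by blast
  qed
next
  show "(\<Union>l \<in> {n div 2 .. min ((n + k) div 2) n - 1}. LP l (n - 1 - l) 0 (k - 1)) \<subseteq> pts ` DD n (k-1)"
  proof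
    fix p assume "p \<in> (\<Union>l \<in> {n div 2 .. min ((n + k) div 2) n - 1}. LP l (n - 1 - l) 0 (k - 1))"
    then obtain l where l: "l \<in> {n div 2 .. min ((n + k) div 2) n - 1}" and p: "p \<in> LP l (n - 1 - l) 0 (k - 1)"
      by blast
    obtain ds where "p = pts ds" "length ds = l + (n - 1 - l)" "okk (k-1) ds"
      using pts_surj[OF p] by blast
    moreover have "l + (n - 1 - l) = n - 1" using l by auto
    ultimately show "p \<in> pts ` DD n (k-1)" by (auto simp: DD_def)
  qed
qed

theorem mainTheorem3:
  fixes n k :: nat
  assumes "n \<ge> 1" and "k \<ge> 1"
  defines "K \<equiv> min ((n + k) div 2) n"
  shows "card (Hom1 n k) =
    (\<Sum>l = nat (ceiling ((real n - 1) / 2)) .. K - 1. card (LP l (n - 1 - l) 0 (k - 1)))"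
proof -
  let ?I = "{n div 2 .. K - 1}"
  let ?U = "\<Union>l \<in> ?I. LP l (n - 1 - l) 0 (k - 1)"
  have "card (Hom1 n k) = card (DD n (k-1))" by (rule card_Hom1_DD[OF assms(1,2)])
  also have "\<dots> = card (pts ` DD n (k-1))"
    by (rule card_image[symmetric]) (meson inj_on_subset pts_inj subset_UNIV)
  also have "pts ` DD n (k-1) = ?U" using DD_image[OF assms(1,2)] by (simp add: K_def)
  also have "card ?U = (\<Sum>l \<in> ?I. card (LP l (n - 1 - l) 0 (k - 1)))"
  proof (rule card_UN_disjoint)
    show "finite ?I" by simp
    have fU: "finite ?U"
      using DD_image[OF assms(1,2)] finite_DD by (metis K_def finite_imageI)
    show "\<forall>i\<in>?I. finite (LP i (n - 1 - i) 0 (k - 1))"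
      using fU by (meson UN_upper finite_subset)
    show "\<forall>i\<in>?I. \<forall>j\<in>?I. i \<noteq> j \<longrightarrow> LP i (n - 1 - i) 0 (k - 1) \<inter> LP j (n - 1 - j) 0 (k - 1) = {}"
    proof (intro ballI impI)
      fix i j assume "i \<in> ?I" "j \<in> ?I" "i \<noteq> j"
      show "LP i (n - 1 - i) 0 (k - 1) \<inter> LP j (n - 1 - j) 0 (k - 1) = {}"
      proof (rule ccontr)
        assume "LP i (n - 1 - i) 0 (k - 1) \<inter> LP j (n - 1 - j) 0 (k - 1) \<noteq> {}"
        then obtain p where "p \<in> LP i (n - 1 - i) 0 (k - 1)" "p \<in> LP j (n - 1 - j) 0 (k - 1)" by blast
        then have "last p = (int i, int (n-1-i))" "last p = (int j, int (n-1-j))"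
          by (simp_all add: LP_def is_lattice_path_def)
        then show False using \<open>i \<noteq> j\<close> by simp
      qed
    qed
  qed
  finally show ?thesis by (simp add: ceil_half)
qed

end
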